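(* Let $\alpha\ge2$ be an even integer and $\beta\ge1$ an integer. Put $\theta=1$ if $\alpha\equiv0\pmod 4$ and $\theta=2$ if $\alpha\equiv2\pmod4$. Let $\Lambda\subseteq\mathbb Z^2$ be the lattice with generator matrix $$G=\begin{pmatrix}\beta & \tfrac{\alpha}{2}+\theta\\ 0 & \alpha\end{pmatrix}.$$ Let $\mathcal S=\{0,\dots,\beta-1\}\times\{0,\dots,\alpha-1\}$ and $\delta=(+1,0)$. Then $\Lambda$ induces a lattice tiling of $\mathcal S$, and $(\Lambda,\mathcal S,\delta)$ defines a folding.
   Context: A shape is a finite nonempty set $\mathcal S\subset\mathbb Z^2$ containing the origin; the origin is its distinguished center point. A lattice is a set $\Lambda=\{u_1v_1+u_2v_2 : u_1,u_2\in\mathbb Z\}$ for linearly independent $v_1,v_2\in\mathbb Z^2$. The matrix $G$ with rows $v_1,v_2$ is a generator matrix. $\Lambda$ induces a lattice tiling of $\mathcal S$ if the translates $\mathcal S+\lambda$, $\lambda\in\Lambda$, are pairwise disjoint and cover $\mathbb Z^2$. For $x\in\mathbb Z^2$, $c(x)$ denotes the unique $\lambda\in\Lambda$ with $x\in\mathcal S+\lambda$. For a nonzero $\delta\in\{-1,0,1\}^2$, the folded-row of $(\Lambda,\mathcal S,\delta)$ is the sequence $p_0=0$, $p_{k+1}=(p_k+\delta)-c(p_k+\delta)$. The triple $(\Lambda,\mathcal S,\delta)$ defines a folding if every element of $\mathcal S$ occurs in the folded-row. *)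

theory Defs
  imports Main
begin

type_synonym pt = "int \<times> int"

definition padd :: "pt \<Rightarrow> pt \<Rightarrow> pt" where
  "padd x y = (fst x + fst y, snd x + snd y)"

definition psub :: "pt \<Rightarrow> pt \<Rightarrow> pt" where
  "psub x y = (fst x - fst y, snd x - snd y)"

text \<open>Lattice generated by the rows v1, v2 of a generator matrix.\<close>
definition lattice_of :: "pt \<Rightarrow> pt \<Rightarrow> pt set" where
  "lattice_of v1 v2 = {(u1 * fst v1 + u2 * fst v2, u1 * snd v1 + u2 * snd v2) | u1 u2 :: int. True}"

definition lin_indep2 :: "pt \<Rightarrow> pt \<Rightarrow> bool" where
  "lin_indep2 v1 v2 \<longleftrightarrow> fst v1 * snd v2 - snd v1 * fst v2 \<noteq> 0"

definition translate :: "pt set \<Rightarrow> pt \<Rightarrow> pt set" where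
  "translate S l = (\<lambda>s. padd s l) ` S"

definition induces_tiling :: "pt set \<Rightarrow> pt set \<Rightarrow> bool" where
  "induces_tiling L S \<longleftrightarrow>
     (\<forall>l\<in>L. \<forall>l'\<in>L. l \<noteq> l' \<longrightarrow> translate S l \<inter> translate S l' = {}) \<and>
     (\<Union>l\<in>L. translate S l) = UNIV"

definition tile_center :: "pt set \<Rightarrow> pt set \<Rightarrow> pt \<Rightarrow> pt" where
  "tile_center L S x = (THE l. l \<in> L \<and> x \<in> translate S l)"

fun folded_row :: "pt set \<Rightarrow> pt set \<Rightarrow> pt \<Rightarrow> nat \<Rightarrow> pt" where
  "folded_row L S d 0 = (0, 0)"
| "folded_row L S d (Suc k) =
     (let q = padd (folded_row L S d k) d in psub q (tile_center L S q))"

definition defines_folding :: "pt set \<Rightarrow> pt set \<Rightarrow> pt \<Rightarrow> bool" where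
  "defines_folding L S d \<longleftrightarrow> (\<forall>s\<in>S. \<exists>k. folded_row L S d k = s)"

end

theory Submission
  imports Defs
begin
definition cen :: "int \<Rightarrow> int \<Rightarrow> int \<Rightarrow> pt \<Rightarrow> pt" where
  "cen b m a x = (b * (fst x div b), (fst x div b) * m + a * ((snd x - (fst x div b) * m) div a))"

lemma char_tile1:
  fixes a b m :: int
  assumes a: "a > 0" and b: "b > 0"
  assumes h: "l \<in> lattice_of (b, m) (0, a) \<and> x \<in> translate ({0..b - 1} \<times> {0..a - 1}) l"
  shows "l = cen b m a x"
proof -
  from h obtain u1 u2 where l: "l = (u1 * b, u1 * m + u2 * a)"
    unfolding lattice_of_def by auto
  from h obtain s where s: "s \<in> {0..b - 1} \<times> {0..a - 1}" "x = padd s l"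
    unfolding translate_def by auto
  obtain s1 s2 where s: "0 \<le> s1" "s1 \<le> b - 1" "0 \<le> s2" "s2 \<le> a - 1"
    and x: "x = (s1 + u1 * b, s2 + (u1 * m + u2 * a))"
    using s unfolding padd_def l by auto
  have d1: "fst x div b = u1"
    using s x by (intro int_div_pos_eq[where r = s1]) (auto simp: algebra_simps)
  have d2: "(snd x - u1 * m) div a = u2"
    using s x by (intro int_div_pos_eq[where r = s2]) (auto simp: algebra_simps)
  show "l = cen b m a x" unfolding cen_def d1 d2 l by (simp add: algebra_simps)
qed
lemma char_tile2:
  fixes a b m :: int
  assumes a: "a > 0" and b: "b > 0"
  shows "cen b m a x \<in> lattice_of (b, m) (0, a) \<and> x \<in> translate ({0..b - 1} \<times> {0..a - 1}) (cen b m a x)"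
proof -
  define u1 where "u1 = fst x div b"
  define u2 where "u2 = (snd x - u1 * m) div a"
  have l2: "cen b m a x = (u1 * b + u2 * 0, u1 * m + u2 * a)"
    unfolding cen_def u1_def u2_def by (simp add: algebra_simps)
  have "cen b m a x \<in> lattice_of (b, m) (0, a)" unfolding lattice_of_def l2 by auto
  moreover have "x = padd (fst x mod b, (snd x - u1 * m) mod a) (cen b m a x)"
  proof -
    have e1: "fst x = fst x mod b + u1 * b" unfolding u1_def by simp
    have e2: "snd x = (snd x - u1 * m) mod a + u1 * m + u2 * a"
      unfolding u2_def by (simp add: minus_mod_eq_mult_div[symmetric] algebra_simps)
    show ?thesis unfolding padd_def l2 prod_eq_iff using e1 e2 by simp
  qed
  moreover have "(fst x mod b, (snd x - u1 * m) mod a) \<in> {0..b - 1} \<times> {0..a - 1}"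
    using a b by auto
  ultimately show ?thesis
    unfolding translate_def by (metis image_eqI)
qed

lemma char_tile:
  fixes a b m :: int
  assumes a: "a > 0" and b: "b > 0"
  shows "(l \<in> lattice_of (b, m) (0, a) \<and> x \<in> translate ({0..b - 1} \<times> {0..a - 1}) l)
         \<longleftrightarrow> l = cen b m a x"
  using char_tile1[OF a b] char_tile2[OF a b] by blast
lemma tiling_gen:
  fixes a b m :: int
  assumes a: "a > 0" and b: "b > 0"
  shows "induces_tiling (lattice_of (b, m) (0, a)) ({0..b - 1} \<times> {0..a - 1})"
    and "tile_center (lattice_of (b, m) (0, a)) ({0..b - 1} \<times> {0..a - 1}) x = cen b m a x"
proof -
  note c = char_tile[OF a b, where m=m]
  show "tile_center (lattice_of (b, m) (0, a)) ({0..b - 1} \<times> {0..a - 1}) x = cen b m a x"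
    unfolding tile_center_def c by simp
  show "induces_tiling (lattice_of (b, m) (0, a)) ({0..b - 1} \<times> {0..a - 1})"
    unfolding induces_tiling_def
  proof (intro conjI ballI impI)
    fix l l' assume "l \<in> lattice_of (b, m) (0, a)" "l' \<in> lattice_of (b, m) (0, a)" "l \<noteq> l'"
    show "translate ({0..b - 1} \<times> {0..a - 1}) l \<inter> translate ({0..b - 1} \<times> {0..a - 1}) l' = {}"
    proof (rule ccontr)
      assume "translate ({0..b - 1} \<times> {0..a - 1}) l \<inter> translate ({0..b - 1} \<times> {0..a - 1}) l' \<noteq> {}"
      then obtain x where "x \<in> translate ({0..b - 1} \<times> {0..a - 1}) l" "x \<in> translate ({0..b - 1} \<times> {0..a - 1}) l'" by blast
      then have "l = cen b m a x" "l' = cen b m a x" using char_tile1[OF a b] \<open>l \<in> _\<close> \<open>l' \<in> _\<close> by blast+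
      then show False using \<open>l \<noteq> l'\<close> by simp
    qed
  next
    show "(\<Union>l\<in>lattice_of (b, m) (0, a). translate ({0..b - 1} \<times> {0..a - 1}) l) = UNIV"
      using char_tile2[OF a b, where m=m] by blast
  qed
qed

lemma row_formula:
  fixes a b m :: int
  assumes a: "a > 0" and b: "b > 0"
  shows "folded_row (lattice_of (b, m) (0, a)) ({0..b - 1} \<times> {0..a - 1}) (1, 0) k
         = (int k mod b, (- (int k div b) * m) mod a)"
proof (induction k)
  case 0
  then show ?case by simp
next
  case (Suc k)
  note tc = tiling_gen(2)[OF a b]
  define r where "r = int k mod b"
  define q where "q = int k div b"
  define y where "y = (- q * m) mod a"
  have kk: "int k = b * q + r" unfolding r_def q_def by simp
  have r: "0 \<le> r" "r < b" unfolding r_def using b by auto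
  have y: "0 \<le> y" "y < a" unfolding y_def using a by auto
  have IH: "folded_row (lattice_of (b, m) (0, a)) ({0..b - 1} \<times> {0..a - 1}) (1, 0) k = (r, y)"
    using Suc r_def q_def y_def by simp
  show ?case
  proof (cases "r + 1 < b")
    case True
    have "(r + 1) div b = 0" using True r by (intro int_div_pos_eq[where r = "r+1"]) auto
    moreover have "y div a = 0" using y by (intro int_div_pos_eq[where r = y]) auto
    moreover have "int (Suc k) div b = q" using True r kk
      by (intro int_div_pos_eq[where r = "r+1"]) auto
    moreover have "int (Suc k) mod b = r + 1" using True r kk
      by (intro int_mod_pos_eq[where q = q]) auto
    ultimately show ?thesis using IH y_def
      by (simp add: tc cen_def padd_def psub_def Let_def)
  next
    case False
    then have rb: "r + 1 = b" using r by auto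
    have "(r + 1) div b = 1" using rb b by simp
    moreover have "int (Suc k) div b = q + 1" using rb b kk
      by (intro int_div_pos_eq[where r = 0]) (auto simp: algebra_simps)
    moreover have "int (Suc k) mod b = 0" using rb b kk
      by (intro int_mod_pos_eq[where q = "q+1"]) (auto simp: algebra_simps)
    moreover have "y - m - a * ((y - m) div a) = (- (q + 1) * m) mod a"
    proof -
      have "y - m - a * ((y - m) div a) = (y - m) mod a" by (simp add: minus_div_mult_eq_mod[symmetric] algebra_simps)
      also have "\<dots> = (- q * m - m) mod a" unfolding y_def by (simp add: mod_diff_left_eq)
      also have "- q * m - m = - (q + 1) * m" by (simp add: algebra_simps)
      finally show ?thesis .
    qed
    ultimately show ?thesis using IH rb
      by (simp add: tc cen_def padd_def psub_def Let_def)
  qed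
qed

lemma coprime_m:
  fixes a m :: int
  assumes "a \<ge> 2" "even a" "m = a div 2 + (if a mod 4 = 0 then 1 else 2)"
  shows "gcd m a = 1"
proof -
  define d where "d = gcd m a"
  have dm: "d dvd m" and da: "d dvd a" unfolding d_def by auto
  have d0: "d \<ge> 0" unfolding d_def by simp
  have om: "odd m"
  proof (cases "a mod 4 = 0")
    case True
    then obtain k where "a = 4 * k" by (metis dvd_def mod_eq_0_iff_dvd)
    then show ?thesis using assms(3) True by simp
  next
    case False
    from assms(2) obtain j where j: "a = 2 * j" by blast
    with False have "odd j" by auto
    then obtain k where "j = 2 * k + 1" by (metis oddE)
    then show ?thesis using assms(3) False j by simp
  qed
  have "d dvd 2 * m - a" using dm da by (simp add: dvd_diff)
  moreover have "2 * m - a = 2 \<or> 2 * m - a = 4" using assms by auto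
  ultimately have d4: "d dvd 4" by (metis dvd_trans dvd_triv_left numeral_Bit0 mult_2)
  have "odd d" using om dm by (meson dvd_trans)
  have "d \<le> 4" using d4 zdvd_imp_le by simp
  then have "d \<in> {0,1,2,3,4}" using d0 by auto
  with \<open>odd d\<close> d4 show ?thesis unfolding d_def[symmetric] by auto
qed

theorem mainTheorem10:
  fixes \<alpha> \<beta> \<theta> :: int
  assumes "\<alpha> \<ge> 2" and "even \<alpha>" and "\<beta> \<ge> 1"
    and "\<theta> = (if \<alpha> mod 4 = 0 then 1 else 2)"
  defines "L \<equiv> lattice_of (\<beta>, \<alpha> div 2 + \<theta>) (0, \<alpha>)"
    and "S \<equiv> {0..\<beta> - 1} \<times> {0..\<alpha> - 1}"
  shows "induces_tiling L S \<and> defines_folding L S (1, 0)"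
proof
  have a: "\<alpha> > 0" and b: "\<beta> > 0" using assms by auto
  define m where "m = \<alpha> div 2 + \<theta>"
  have L: "L = lattice_of (\<beta>, m) (0, \<alpha>)" unfolding L_def m_def ..
  show "induces_tiling L S" unfolding L S_def by (rule tiling_gen(1)[OF a b])
  have g: "gcd m \<alpha> = 1" using coprime_m[OF assms(1,2)] assms(4) m_def by simp
  obtain u v where uv: "u * m + v * \<alpha> = 1" using bezout_int[of m \<alpha>] g by auto
  show "defines_folding L S (1, 0)"
    unfolding defines_folding_def
  proof
    fix s assume "s \<in> S"
    then obtain s1 s2 where s: "s = (s1, s2)" "0 \<le> s1" "s1 \<le> \<beta> - 1" "0 \<le> s2" "s2 \<le> \<alpha> - 1"
      unfolding S_def by auto
    define n where "n = (- s2 * u) mod \<alpha>"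
    define t where "t = (- s2 * u) div \<alpha>"
    have n0: "n \<ge> 0" unfolding n_def using a by simp
    have nt: "n = - s2 * u - \<alpha> * t" unfolding n_def t_def by (simp add: minus_div_mult_eq_mod[symmetric])
    define k where "k = nat (\<beta> * n + s1)"
    have kk: "int k = \<beta> * n + s1" unfolding k_def using n0 s b by simp
    have "int k div \<beta> = n" using kk s by (intro int_div_pos_eq[where r = s1]) auto
    moreover have "int k mod \<beta> = s1" using kk s by (intro int_mod_pos_eq[where q = n]) auto
    moreover have "(- n * m) mod \<alpha> = s2"
    proof (rule int_mod_pos_eq[where q = "t * m - s2 * v"])
      have "- n * m = s2 * (u * m) + \<alpha> * t * m" unfolding nt by (simp add: algebra_simps)
      also have "\<dots> = s2 * (1 - v * \<alpha>) + \<alpha> * t * m" proof -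
        have "s2 * (u * m) = s2 * (1 - v * \<alpha>)" using arg_cong[OF uv, of "\<lambda>z. s2 * z"] by (simp add: algebra_simps)
        then show ?thesis by simp
      qed
      finally show "- n * m = \<alpha> * (t * m - s2 * v) + s2" by (simp add: algebra_simps)
    qed (use s in auto)
    ultimately have "folded_row L S (1, 0) k = s"
      unfolding L S_def row_formula[OF a b] s by simp
    then show "\<exists>k. folded_row L S (1, 0) k = s" by blast
  qed
qed

end
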